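(* Let $P$ be a trivial poset. If $w(P)=1$, then $R(P,Q_n)=n+h(P)-1$ for every positive integer $n$. If $w(P)\ge2$, then for every positive integer $n$, $$n+h(P)+1\le R(P,Q_n)<n+h(P)+\log(w(P))+\tfrac12\log\log(w(P))+1.$$
   Context: The poset $\mathcal{V}$ has three elements $A,B,C$ with $C\le A$, $C\le B$, $A$ and $B$ incomparable; the poset $\Lambda$ (upside-down $\mathcal{V}$) has three elements $A,B,C$ with $A\le C$, $B\le C$, $A$ and $B$ incomparable. A poset is trivial if it contains no induced subposet isomorphic to $\mathcal{V}$ or to $\Lambda$ (equivalently, it is a disjoint union of chains that are pairwise element-wise incomparable). The height $h(P)$ is the size of a largest chain in $P$; the width $w(P)$ is the size of a largest antichain in $P$. $Q_n$ is the Boolean lattice of subsets of an $n$-element set ordered by inclusion. $R(P_1,P_2)$ is the smallest integer $N$ such that every blue/red coloring of the elements of $Q_N$ contains an all-blue induced copy of $P_1$ or an all-red induced copy of $P_2$. $\log$ is base $2$. *)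

theory Defs
  imports Complex_Main
begin

definition is_poset :: "'a set \<Rightarrow> ('a \<times> 'a) set \<Rightarrow> bool" where
  "is_poset A r \<longleftrightarrow> finite A \<and> partial_order_on A r"

definition is_chain :: "'a set \<Rightarrow> ('a \<times> 'a) set \<Rightarrow> 'a set \<Rightarrow> bool" where
  "is_chain A r C \<longleftrightarrow> C \<subseteq> A \<and> (\<forall>x\<in>C. \<forall>y\<in>C. (x, y) \<in> r \<or> (y, x) \<in> r)"

definition is_antichain :: "'a set \<Rightarrow> ('a \<times> 'a) set \<Rightarrow> 'a set \<Rightarrow> bool" where
  "is_antichain A r C \<longleftrightarrow> C \<subseteq> A \<and> (\<forall>x\<in>C. \<forall>y\<in>C. x \<noteq> y \<longrightarrow> (x, y) \<notin> r)"

definition height :: "'a set \<Rightarrow> ('a \<times> 'a) set \<Rightarrow> nat" where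
  "height A r = Max (card ` {C. is_chain A r C})"

definition width :: "'a set \<Rightarrow> ('a \<times> 'a) set \<Rightarrow> nat" where
  "width A r = Max (card ` {C. is_antichain A r C})"

definition incomparable :: "('a \<times> 'a) set \<Rightarrow> 'a \<Rightarrow> 'a \<Rightarrow> bool" where
  "incomparable r x y \<longleftrightarrow> (x, y) \<notin> r \<and> (y, x) \<notin> r"

definition contains_V :: "'a set \<Rightarrow> ('a \<times> 'a) set \<Rightarrow> bool" where
  "contains_V A r \<longleftrightarrow> (\<exists>a\<in>A. \<exists>b\<in>A. \<exists>c\<in>A. a \<noteq> b \<and> a \<noteq> c \<and> b \<noteq> c \<and>
      (c, a) \<in> r \<and> (c, b) \<in> r \<and> incomparable r a b)"

definition contains_Lambda :: "'a set \<Rightarrow> ('a \<times> 'a) set \<Rightarrow> bool" where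
  "contains_Lambda A r \<longleftrightarrow> (\<exists>a\<in>A. \<exists>b\<in>A. \<exists>c\<in>A. a \<noteq> b \<and> a \<noteq> c \<and> b \<noteq> c \<and>
      (a, c) \<in> r \<and> (b, c) \<in> r \<and> incomparable r a b)"

definition trivial_poset :: "'a set \<Rightarrow> ('a \<times> 'a) set \<Rightarrow> bool" where
  "trivial_poset A r \<longleftrightarrow> \<not> contains_V A r \<and> \<not> contains_Lambda A r"

definition Qcar :: "nat \<Rightarrow> nat set set" where
  "Qcar n = Pow {..<n}"

definition Qrel :: "nat \<Rightarrow> (nat set \<times> nat set) set" where
  "Qrel n = {(X, Y). X \<in> Qcar n \<and> Y \<in> Qcar n \<and> X \<subseteq> Y}"

definition induced_embedding ::
  "'a set \<Rightarrow> ('a \<times> 'a) set \<Rightarrow> 'b set \<Rightarrow> ('b \<times> 'b) set \<Rightarrow> ('a \<Rightarrow> 'b) \<Rightarrow> bool" where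
  "induced_embedding A r B s f \<longleftrightarrow> inj_on f A \<and> f ` A \<subseteq> B \<and>
     (\<forall>x\<in>A. \<forall>y\<in>A. (x, y) \<in> r \<longleftrightarrow> (f x, f y) \<in> s)"

text \<open>Every blue/red colouring (blue = True) of Q_N contains a blue induced copy of P1
  or a red induced copy of P2.\<close>

definition ramsey_arrow ::
  "'a set \<Rightarrow> ('a \<times> 'a) set \<Rightarrow> 'b set \<Rightarrow> ('b \<times> 'b) set \<Rightarrow> nat \<Rightarrow> bool" where
  "ramsey_arrow A1 r1 A2 r2 N \<longleftrightarrow>
     (\<forall>c :: nat set \<Rightarrow> bool.
        (\<exists>f. induced_embedding A1 r1 (Qcar N) (Qrel N) f \<and> (\<forall>x\<in>A1. c (f x))) \<or>
        (\<exists>g. induced_embedding A2 r2 (Qcar N) (Qrel N) g \<and> (\<forall>x\<in>A2. \<not> c (g x))))"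

definition poset_ramsey ::
  "'a set \<Rightarrow> ('a \<times> 'a) set \<Rightarrow> 'b set \<Rightarrow> ('b \<times> 'b) set \<Rightarrow> nat" where
  "poset_ramsey A1 r1 A2 r2 = (LEAST N. ramsey_arrow A1 r1 A2 r2 N)"

end

theory Submission
  imports Defs
begin

lemma poset_facts:
  assumes "is_poset A r"
  shows "finite A" "r \<subseteq> A \<times> A" "\<And>x. x \<in> A \<Longrightarrow> (x,x) \<in> r" "trans r" "antisym r"
  using assms unfolding is_poset_def partial_order_on_def preorder_on_def refl_on_def by auto

lemma height_props:
  assumes "is_poset A r"
  shows "\<exists>C. is_chain A r C \<and> card C = height A r"
    and "is_chain A r C \<Longrightarrow> card C \<le> height A r"
proof -
  have fin: "finite {C. is_chain A r C}"
    using poset_facts(1)[OF assms] by (rule finite_subset[rotated, OF finite_Pow_iff[THEN iffD2]]) (auto simp: is_chain_def)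
  have ne: "{} \<in> {C. is_chain A r C}" by (simp add: is_chain_def)
  show "\<exists>C. is_chain A r C \<and> card C = height A r"
    using Max_in[of "card ` {C. is_chain A r C}"] fin ne unfolding height_def by fastforce
  show "is_chain A r C \<Longrightarrow> card C \<le> height A r"
    using fin unfolding height_def by (intro Max_ge) auto
qed

lemma width_props:
  assumes "is_poset A r"
  shows "\<exists>C. is_antichain A r C \<and> card C = width A r"
    and "is_antichain A r C \<Longrightarrow> card C \<le> width A r"
proof -
  have fin: "finite {C. is_antichain A r C}"
    using poset_facts(1)[OF assms] by (rule finite_subset[rotated, OF finite_Pow_iff[THEN iffD2]]) (auto simp: is_antichain_def)
  have ne: "{} \<in> {C. is_antichain A r C}" by (simp add: is_antichain_def)
  show "\<exists>C. is_antichain A r C \<and> card C = width A r"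
    using Max_in[of "card ` {C. is_antichain A r C}"] fin ne unfolding width_def by fastforce
  show "is_antichain A r C \<Longrightarrow> card C \<le> width A r"
    using fin unfolding width_def by (intro Max_ge) auto
qed

definition cmp :: "('a \<times> 'a) set \<Rightarrow> 'a \<Rightarrow> 'a \<Rightarrow> bool" where
  "cmp r x y \<longleftrightarrow> (x,y) \<in> r \<or> (y,x) \<in> r"

lemma cmp_trans:
  assumes P: "is_poset A r" and T: "trivial_poset A r"
    and xyz: "x \<in> A" "y \<in> A" "z \<in> A" and h: "cmp r x y" "cmp r y z"
  shows "cmp r x z"
proof -
  note pf = poset_facts[OF P]
  show ?thesis
  proof (cases "x = y \<or> y = z \<or> x = z")
    case True thus ?thesis using h pf(3)[OF xyz(1)] by (auto simp: cmp_def)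
  next
    case False
    show ?thesis
    proof (rule ccontr)
      assume nc: "\<not> cmp r x z"
      hence inc: "incomparable r x z" by (simp add: cmp_def incomparable_def)
      consider "(x,y) \<in> r" "(y,z) \<in> r" | "(y,x) \<in> r" "(z,y) \<in> r" | "(x,y) \<in> r" "(z,y) \<in> r"
        | "(y,x) \<in> r" "(y,z) \<in> r" using h by (auto simp: cmp_def)
      thus False
      proof cases
        case 1 thus False using pf(4) nc unfolding trans_def cmp_def by blast
      next
        case 2 thus False using pf(4) nc unfolding trans_def cmp_def by blast
      next
        case 3
        have "contains_Lambda A r" unfolding contains_Lambda_def
          using 3 False inc xyz by blast
        thus False using T by (simp add: trivial_poset_def)
      next
        case 4
        have "contains_V A r" unfolding contains_V_def
          using 4 False inc xyz by blast
        thus False using T by (simp add: trivial_poset_def)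
      qed
    qed
  qed
qed

definition linord :: "'b set \<Rightarrow> ('b \<times> 'b) set \<Rightarrow> bool" where
  "linord K R \<longleftrightarrow> (\<forall>x\<in>K. (x,x) \<in> R) \<and> (\<forall>x\<in>K. \<forall>y\<in>K. (x,y) \<in> R \<longrightarrow> (y,x) \<in> R \<longrightarrow> x = y)
     \<and> (\<forall>x\<in>K. \<forall>y\<in>K. \<forall>z\<in>K. (x,y) \<in> R \<longrightarrow> (y,z) \<in> R \<longrightarrow> (x,z) \<in> R)
     \<and> (\<forall>x\<in>K. \<forall>y\<in>K. (x,y) \<in> R \<or> (y,x) \<in> R)"

definition rank :: "'b set \<Rightarrow> ('b \<times> 'b) set \<Rightarrow> 'b \<Rightarrow> nat" where
  "rank K R x = card {y\<in>K. (y,x) \<in> R}"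

lemma linordD:
  assumes "linord K R"
  shows "x \<in> K \<Longrightarrow> (x,x) \<in> R"
    "x \<in> K \<Longrightarrow> y \<in> K \<Longrightarrow> (x,y) \<in> R \<Longrightarrow> (y,x) \<in> R \<Longrightarrow> x = y"
    "x \<in> K \<Longrightarrow> y \<in> K \<Longrightarrow> z \<in> K \<Longrightarrow> (x,y) \<in> R \<Longrightarrow> (y,z) \<in> R \<Longrightarrow> (x,z) \<in> R"
    "x \<in> K \<Longrightarrow> y \<in> K \<Longrightarrow> (x,y) \<notin> R \<Longrightarrow> (y,x) \<in> R"
  using assms unfolding linord_def by blast+

lemma rank_mono:
  assumes L: "linord K R" and f: "finite K" and xy: "x \<in> K" "y \<in> K"
  shows "(x,y) \<in> R \<longleftrightarrow> rank K R x \<le> rank K R y"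
proof
  assume xyR: "(x,y) \<in> R"
  have "{z\<in>K. (z,x) \<in> R} \<subseteq> {z\<in>K. (z,y) \<in> R}"
  proof
    fix z assume "z \<in> {z\<in>K. (z,x) \<in> R}"
    thus "z \<in> {z\<in>K. (z,y) \<in> R}" using linordD(3)[OF L _ xy(1) xy(2) _ xyR] by simp
  qed
  thus "rank K R x \<le> rank K R y" unfolding rank_def by (rule card_mono[rotated]) (use f in auto)
next
  assume le: "rank K R x \<le> rank K R y"
  show "(x,y) \<in> R"
  proof (rule ccontr)
    assume n: "(x,y) \<notin> R"
    hence yx: "(y,x) \<in> R" using linordD(4)[OF L xy] by simp
    have "{z\<in>K. (z,y) \<in> R} \<subset> {z\<in>K. (z,x) \<in> R}"
    proof
      show "{z\<in>K. (z,y) \<in> R} \<subseteq> {z\<in>K. (z,x) \<in> R}"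
      proof
        fix z assume "z \<in> {z\<in>K. (z,y) \<in> R}"
        thus "z \<in> {z\<in>K. (z,x) \<in> R}" using linordD(3)[OF L _ xy(2) xy(1) _ yx] by simp
      qed
      have "x \<in> {z\<in>K. (z,x) \<in> R}" using linordD(1)[OF L xy(1)] xy(1) by simp
      moreover have "x \<notin> {z\<in>K. (z,y) \<in> R}" using n by simp
      ultimately show "{z\<in>K. (z,y) \<in> R} \<noteq> {z\<in>K. (z,x) \<in> R}" by blast
    qed
    hence "rank K R y < rank K R x" unfolding rank_def by (rule psubset_card_mono[rotated]) (use f in auto)
    thus False using le by simp
  qed
qed

lemma rank_range:
  assumes L: "linord K R" and f: "finite K" and x: "x \<in> K"
  shows "rank K R x \<in> {1..card K}"
proof -
  have "x \<in> {y\<in>K. (y,x) \<in> R}" using linordD(1)[OF L x] x by simp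
  moreover have "finite {y\<in>K. (y,x) \<in> R}" using f by simp
  ultimately have "0 < rank K R x" unfolding rank_def using card_gt_0_iff by blast
  hence "rank K R x \<ge> 1" by simp
  moreover have "rank K R x \<le> card K" unfolding rank_def by (rule card_mono) (use f in auto)
  ultimately show ?thesis by simp
qed

lemma rank_image:
  assumes L: "linord K R" and f: "finite K"
  shows "rank K R ` K = {1..card K}"
proof -
  have inj: "inj_on (rank K R) K"
  proof
    fix x y assume "x \<in> K" "y \<in> K" "rank K R x = rank K R y"
    hence "(x,y) \<in> R" "(y,x) \<in> R" using rank_mono[OF L f] by auto
    thus "x = y" using linordD(2)[OF L \<open>x \<in> K\<close> \<open>y \<in> K\<close>] by blast
  qed
  show ?thesis
  proof (rule card_subset_eq)
    show "finite {1..card K}" by simp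
    show "rank K R ` K \<subseteq> {1..card K}" using rank_range[OF L f] by auto
    show "card (rank K R ` K) = card {1..card K}" using card_image[OF inj] by simp
  qed
qed

lemma linemb:
  assumes LK: "linord K R" and LC: "linord C R'" and fK: "finite K" and fC: "finite C"
    and cd: "card K \<le> card C"
  shows "\<exists>\<phi>. (\<forall>x\<in>K. \<phi> x \<in> C) \<and> (\<forall>x\<in>K. \<forall>y\<in>K. (x,y) \<in> R \<longleftrightarrow> (\<phi> x, \<phi> y) \<in> R')"
proof -
  define \<phi> where "\<phi> x = inv_into C (rank C R') (rank K R x)" for x
  have in_img: "rank K R x \<in> rank C R' ` C" if "x \<in> K" for x
    using rank_range[OF LK fK that] rank_image[OF LC fC] cd by auto
  have A: "\<phi> x \<in> C" if "x \<in> K" for x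
    unfolding \<phi>_def using in_img[OF that] by (rule inv_into_into)
  have B: "rank C R' (\<phi> x) = rank K R x" if "x \<in> K" for x
    unfolding \<phi>_def using in_img[OF that] by (rule f_inv_into_f)
  show ?thesis
  proof (intro exI[of _ \<phi>] conjI ballI)
    fix x assume "x \<in> K" thus "\<phi> x \<in> C" by (rule A)
  next
    fix x y assume xy: "x \<in> K" "y \<in> K"
    show "(x,y) \<in> R \<longleftrightarrow> (\<phi> x, \<phi> y) \<in> R'"
      using rank_mono[OF LK fK xy] rank_mono[OF LC fC A[OF xy(1)] A[OF xy(2)]] B xy by simp
  qed
qed

lemma column:
  fixes c :: "nat set \<Rightarrow> bool" and n M N :: nat and S :: "nat set"
  assumes SN: "S \<subseteq> {..<N}" and Sd: "S \<inter> {..<n+M} = {}" and nM: "n+M \<le> N"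
  shows "(\<exists>g. induced_embedding (Qcar n) (Qrel n) (Qcar N) (Qrel N) g \<and> (\<forall>x\<in>Qcar n. \<not> c (g x)))
    \<or> (\<exists>Ch. card Ch = Suc M \<and> (\<forall>E\<in>Ch. c E \<and> (\<exists>T. T \<subseteq> {..<n+M} \<and> E = T \<union> S))
           \<and> (\<forall>E\<in>Ch. \<forall>E'\<in>Ch. E \<subseteq> E' \<or> E' \<subseteq> E))"
proof -
  define col where "col T = (\<lambda>U. U \<union> S) ` Pow T" for T
  define GC where "GC T = {C. C \<subseteq> col T \<and> (\<forall>E\<in>C. c E) \<and> (\<forall>E\<in>C. \<forall>E'\<in>C. E \<subseteq> E' \<or> E' \<subseteq> E)}" for T
  define b where "b T = Max (card ` GC T)" for T
  have finGC: "finite (GC T)" if "finite T" for T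
  proof -
    have "GC T \<subseteq> Pow (col T)" by (auto simp: GC_def)
    moreover have "finite (col T)" using that by (simp add: col_def)
    ultimately show ?thesis by (meson finite_Pow_iff finite_subset)
  qed
  have emp: "{} \<in> GC T" for T by (simp add: GC_def)
  have b_ge: "card C \<le> b T" if "finite T" "C \<in> GC T" for T C
    unfolding b_def using finGC[OF that(1)] that(2) by (intro Max_ge) auto
  have b_att: "\<exists>C\<in>GC T. card C = b T" if "finite T" for T
  proof -
    have "b T \<in> card ` GC T" unfolding b_def using finGC[OF that] emp by (intro Max_in) auto
    thus ?thesis by auto
  qed
  have b_mono: "b T \<le> b T'" if "T \<subseteq> T'" "finite T'" for T T'
  proof -
    have fT: "finite T" using that finite_subset by blast
    obtain C where C: "C \<in> GC T" "card C = b T" using b_att[OF fT] by blast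
    have "col T \<subseteq> col T'" unfolding col_def using that(1) by (intro image_mono) auto
    hence "C \<in> GC T'" using C(1) unfolding GC_def by auto
    hence "card C \<le> b T'" by (rule b_ge[OF that(2)])
    thus ?thesis using C(2) by simp
  qed
  have b_pos: "1 \<le> b T" if "finite T" "c (T \<union> S)" for T
  proof -
    have "{T \<union> S} \<in> GC T" using that(2) unfolding GC_def col_def by auto
    thus ?thesis using b_ge[OF that(1)] by fastforce
  qed
  have b_step: "b T' + 1 \<le> b T" if "T' \<subseteq> T" "T' \<noteq> T" "T \<inter> S = {}" "finite T" "c (T \<union> S)" for T T'
  proof -
    have fT': "finite T'" using that finite_subset by blast
    obtain C where C: "C \<in> GC T'" "card C = b T'" using b_att[OF fT'] by blast
    have "finite (col T')" using fT' by (simp add: col_def)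
    hence fC: "finite C" using C(1) unfolding GC_def by (auto intro: finite_subset)
    have sub: "E \<subseteq> T' \<union> S" if "E \<in> C" for E using C(1) that unfolding GC_def col_def by blast
    have notin: "T \<union> S \<notin> C"
    proof
      assume "T \<union> S \<in> C"
      hence "T \<union> S \<subseteq> T' \<union> S" by (rule sub)
      hence "T \<subseteq> T'" using \<open>T \<inter> S = {}\<close> by blast
      thus False using that(1,2) by blast
    qed
    have colsub: "col T' \<subseteq> col T" unfolding col_def using that(1) by (intro image_mono) auto
    have "T \<union> S \<in> col T" unfolding col_def by auto
    hence i1: "insert (T \<union> S) C \<subseteq> col T" using C(1) colsub unfolding GC_def by auto
    have i2: "\<forall>E\<in>insert (T \<union> S) C. c E" using C(1) that(5) unfolding GC_def by auto
    have sub2: "E \<subseteq> T \<union> S" if "E \<in> C" for E using sub[OF that] \<open>T' \<subseteq> T\<close> by blast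
    have i3: "\<forall>E\<in>insert (T \<union> S) C. \<forall>E'\<in>insert (T \<union> S) C. E \<subseteq> E' \<or> E' \<subseteq> E"
      using C(1) sub2 unfolding GC_def by auto
    have "insert (T \<union> S) C \<in> GC T" using i1 i2 i3 unfolding GC_def by blast
    hence "card (insert (T \<union> S) C) \<le> b T" by (rule b_ge[OF that(4)])
    thus ?thesis using card_insert_disjoint[OF fC notin] C(2) by simp
  qed
  show ?thesis
  proof (cases "\<exists>T. T \<subseteq> {..<n+M} \<and> Suc M \<le> b T")
    case True
    then obtain T where T: "T \<subseteq> {..<n+M}" "Suc M \<le> b T" by blast
    have fT: "finite T" using T(1) finite_subset by blast
    obtain C where C: "C \<in> GC T" "card C = b T" using b_att[OF fT] by blast
    have "Suc M \<le> card C" using C(2) T(2) by simp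
    then obtain Ch where Ch: "Ch \<subseteq> C" "card Ch = Suc M" "finite Ch" by (rule obtain_subset_with_card_n)
    have "\<forall>E\<in>Ch. c E \<and> (\<exists>U. U \<subseteq> {..<n+M} \<and> E = U \<union> S)"
    proof
      fix E assume "E \<in> Ch"
      hence E: "E \<in> C" using Ch(1) by blast
      hence "c E" "E \<in> col T" using C(1) unfolding GC_def by auto
      then obtain U where "U \<subseteq> T" "E = U \<union> S" unfolding col_def by auto
      thus "c E \<and> (\<exists>U. U \<subseteq> {..<n+M} \<and> E = U \<union> S)" using \<open>c E\<close> T(1) by blast
    qed
    moreover have "\<forall>E\<in>Ch. \<forall>E'\<in>Ch. E \<subseteq> E' \<or> E' \<subseteq> E" using Ch(1) C(1) unfolding GC_def by blast
    ultimately show ?thesis using Ch(2) by blast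
  next
    case False
    have bM: "b T \<le> M" if "T \<subseteq> {..<n+M}" for T using that False not_less_eq_eq by blast
    define Y where "Y i = {n..<n+i}" for i
    define idx where "idx X = (LEAST i. b (X \<union> Y i) \<le> i)" for X
    have XY: "X \<union> Y i \<subseteq> {..<n+M}" if "X \<subseteq> {..<n}" "i \<le> M" for X i
      using that unfolding Y_def by auto
    have idxM: "idx X \<le> M" if "X \<subseteq> {..<n}" for X
      unfolding idx_def by (rule Least_le) (rule bM[OF XY[OF that order_refl]])
    have idxb: "b (X \<union> Y (idx X)) \<le> idx X" if "X \<subseteq> {..<n}" for X
      unfolding idx_def by (rule LeastI[of _ M]) (rule bM[OF XY[OF that order_refl]])
    have red: "\<not> c (X \<union> Y (idx X) \<union> S)" if X: "X \<subseteq> {..<n}" for X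
    proof
      assume bl: "c (X \<union> Y (idx X) \<union> S)"
      define i where "i = idx X"
      have fin: "finite (X \<union> Y i)" using X unfolding Y_def by (auto intro: finite_subset)
      show False
      proof (cases "i = 0")
        case True
        have "1 \<le> b (X \<union> Y i)" using b_pos[OF fin] bl unfolding i_def by simp
        thus False using idxb[OF X] True unfolding i_def by simp
      next
        case False
        have "\<not> b (X \<union> Y (i-1)) \<le> i - 1" unfolding i_def idx_def
          by (rule not_less_Least) (use False in \<open>simp add: i_def idx_def\<close>)
        hence ge: "i \<le> b (X \<union> Y (i-1))" by simp
        have iM: "i \<le> M" using idxM[OF X] by (simp add: i_def)
        have "b (X \<union> Y (i-1)) + 1 \<le> b (X \<union> Y i)"
        proof (rule b_step)
          show "X \<union> Y (i - 1) \<subseteq> X \<union> Y i" unfolding Y_def by auto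
          have "n + (i-1) \<in> Y i" "n + (i-1) \<notin> X \<union> Y (i-1)" using False X unfolding Y_def by auto
          thus "X \<union> Y (i - 1) \<noteq> X \<union> Y i" by blast
          show "(X \<union> Y i) \<inter> S = {}" using XY[OF X iM] Sd by blast
          show "finite (X \<union> Y i)" by (rule fin)
          show "c (X \<union> Y i \<union> S)" using bl by (simp add: i_def)
        qed
        thus False using ge idxb[OF X] unfolding i_def by simp
      qed
    qed
    have mono: "idx X \<le> idx X'" if "X \<subseteq> X'" "X' \<subseteq> {..<n}" for X X'
    proof -
      have "X \<subseteq> {..<n}" using that by blast
      have "b (X \<union> Y (idx X')) \<le> b (X' \<union> Y (idx X'))"
        using that XY[OF that(2) idxM[OF that(2)]] by (intro b_mono) (auto intro: finite_subset)
      also have "\<dots> \<le> idx X'" by (rule idxb[OF that(2)])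
      finally show ?thesis unfolding idx_def[of X] by (rule Least_le)
    qed
    define g where "g X = X \<union> Y (idx X) \<union> S" for X
    have gcap: "g X \<inter> {..<n} = X" if "X \<subseteq> {..<n}" for X
      using that Sd unfolding g_def Y_def by auto
    have gN: "g X \<subseteq> {..<N}" if "X \<subseteq> {..<n}" for X
      using XY[OF that idxM[OF that]] SN nM unfolding g_def by auto
    have emb: "induced_embedding (Qcar n) (Qrel n) (Qcar N) (Qrel N) g"
      unfolding induced_embedding_def
    proof (intro conjI ballI)
      show "inj_on g (Qcar n)" by (rule inj_onI) (metis gcap Qcar_def PowD)
      show "g ` Qcar n \<subseteq> Qcar N" using gN unfolding Qcar_def by auto
    next
      fix X X' assume XX: "X \<in> Qcar n" "X' \<in> Qcar n"
      hence X: "X \<subseteq> {..<n}" "X' \<subseteq> {..<n}" by (auto simp: Qcar_def)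
      have "X \<subseteq> X' \<longleftrightarrow> g X \<subseteq> g X'"
      proof
        assume "X \<subseteq> X'"
        hence "idx X \<le> idx X'" using mono X by blast
        hence "Y (idx X) \<subseteq> Y (idx X')" unfolding Y_def by auto
        thus "g X \<subseteq> g X'" using \<open>X \<subseteq> X'\<close> unfolding g_def by blast
      next
        assume "g X \<subseteq> g X'"
        hence "g X \<inter> {..<n} \<subseteq> g X' \<inter> {..<n}" by blast
        thus "X \<subseteq> X'" using gcap X by simp
      qed
      thus "((X, X') \<in> Qrel n) = ((g X, g X') \<in> Qrel N)"
        using XX gN X unfolding Qrel_def Qcar_def by auto
    qed
    have "\<forall>x\<in>Qcar n. \<not> c (g x)" using red unfolding g_def Qcar_def by auto
    thus ?thesis using emb by blast
  qed
qed

lemma qchain: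
  assumes g: "induced_embedding (Qcar n) (Qrel n) (Qcar N) (Qrel N) g"
  shows "card (g {}) + n \<le> card (g {..<n})"
proof -
  have gN: "g X \<subseteq> {..<N}" if "X \<subseteq> {..<n}" for X
    using g that unfolding induced_embedding_def Qcar_def by auto
  have "i \<le> n \<Longrightarrow> card (g {}) + i \<le> card (g {..<i})" for i
  proof (induction i)
    case 0 thus ?case by simp
  next
    case (Suc i)
    have m1: "{..<i} \<in> Qcar n" "{..<Suc i} \<in> Qcar n" using Suc.prems by (auto simp: Qcar_def)
    have "({..<i}, {..<Suc i}) \<in> Qrel n" using m1 by (auto simp: Qrel_def)
    hence "(g {..<i}, g {..<Suc i}) \<in> Qrel N" using g m1 unfolding induced_embedding_def by blast
    hence sub: "g {..<i} \<subseteq> g {..<Suc i}" by (simp add: Qrel_def)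
    have "g {..<i} \<noteq> g {..<Suc i}"
    proof
      assume "g {..<i} = g {..<Suc i}"
      hence "{..<i} = {..<Suc i}" using g m1 unfolding induced_embedding_def inj_on_def by blast
      thus False by (metis lessThan_iff lessI less_irrefl)
    qed
    hence "g {..<i} \<subset> g {..<Suc i}" using sub by blast
    moreover have "finite (g {..<Suc i})" using gN[of "{..<Suc i}"] Suc.prems by (auto intro: finite_subset)
    ultimately have "card (g {..<i}) < card (g {..<Suc i})" by (rule psubset_card_mono[rotated])
    thus ?case using Suc by simp
  qed
  thus ?thesis by simp
qed

lemma card_inj_chain:
  assumes "\<forall>E\<in>F. finite E" "\<forall>E\<in>F. \<forall>E'\<in>F. E \<subseteq> E' \<or> E' \<subseteq> E"
  shows "inj_on card F"
proof
  fix E E' assume "E \<in> F" "E' \<in> F" "card E = card E'"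
  thus "E = E'" using assms by (metis card_subset_eq)
qed

lemma emb_facts:
  assumes f: "induced_embedding A r (Qcar N) (Qrel N) f" and x: "x \<in> A" "y \<in> A"
  shows "f x \<subseteq> {..<N}" "(x,y) \<in> r \<longleftrightarrow> f x \<subseteq> f y"
proof -
  have "f x \<in> Qcar N" "f y \<in> Qcar N" using f x unfolding induced_embedding_def by auto
  thus "f x \<subseteq> {..<N}" by (simp add: Qcar_def)
  show "(x,y) \<in> r \<longleftrightarrow> f x \<subseteq> f y" using f x \<open>f x \<in> Qcar N\<close> \<open>f y \<in> Qcar N\<close>
    unfolding induced_embedding_def Qrel_def by auto
qed

lemma chain_img:
  assumes P: "is_poset A r" and f: "induced_embedding A r (Qcar N) (Qrel N) f"
    and C: "is_chain A r C"
  shows "card (card ` f ` C) = card C" "\<forall>E\<in>f ` C. E \<subseteq> {..<N}"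
    "\<forall>E\<in>f`C. \<forall>E'\<in>f`C. E \<subseteq> E' \<or> E' \<subseteq> E"
proof -
  have CA: "C \<subseteq> A" using C by (simp add: is_chain_def)
  show sN: "\<forall>E\<in>f ` C. E \<subseteq> {..<N}" using emb_facts(1)[OF f] CA by blast
  show ch: "\<forall>E\<in>f`C. \<forall>E'\<in>f`C. E \<subseteq> E' \<or> E' \<subseteq> E"
    using C emb_facts(2)[OF f] CA unfolding is_chain_def by blast
  have "inj_on card (f ` C)" using sN ch by (intro card_inj_chain) (auto intro: finite_subset)
  moreover have "inj_on f C" using f CA unfolding induced_embedding_def by (auto intro: inj_on_subset)
  ultimately show "card (card ` f ` C) = card C" by (simp add: card_image)
qed

lemma lower1:
  assumes P: "is_poset A r" and N: "N + 2 \<le> n + height A r" and h1: "1 \<le> height A r"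
  shows "\<not> ramsey_arrow A r (Qcar n) (Qrel n) N"
proof -
  define c where "c X = (n \<le> card X)" for X :: "nat set"
  have noblue: "\<not> (\<exists>f. induced_embedding A r (Qcar N) (Qrel N) f \<and> (\<forall>x\<in>A. c (f x)))"
  proof
    assume "\<exists>f. induced_embedding A r (Qcar N) (Qrel N) f \<and> (\<forall>x\<in>A. c (f x))"
    then obtain f where f: "induced_embedding A r (Qcar N) (Qrel N) f" "\<forall>x\<in>A. c (f x)" by blast
    obtain C where C: "is_chain A r C" "card C = height A r" using height_props(1)[OF P] by blast
    note ci = chain_img[OF P f(1) C(1)]
    have CA: "C \<subseteq> A" using C by (simp add: is_chain_def)
    have "card ` f ` C \<subseteq> {n..N}"
    proof
      fix k assume "k \<in> card ` f ` C"
      then obtain x where x: "x \<in> C" "k = card (f x)" by blast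
      have "n \<le> k" using f(2) x CA unfolding c_def by auto
      moreover have "k \<le> N" using ci(2) x by (metis card_lessThan card_mono finite_lessThan image_eqI)
      ultimately show "k \<in> {n..N}" by simp
    qed
    hence "card (card ` f ` C) \<le> card {n..N}" by (rule card_mono[rotated]) simp
    hence "height A r \<le> Suc N - n" using ci(1) C(2) by simp
    thus False using N h1 by arith
  qed
  have nored: "\<not> (\<exists>g. induced_embedding (Qcar n) (Qrel n) (Qcar N) (Qrel N) g \<and> (\<forall>x\<in>Qcar n. \<not> c (g x)))"
  proof
    assume "\<exists>g. induced_embedding (Qcar n) (Qrel n) (Qcar N) (Qrel N) g \<and> (\<forall>x\<in>Qcar n. \<not> c (g x))"
    then obtain g where g: "induced_embedding (Qcar n) (Qrel n) (Qcar N) (Qrel N) g" "\<forall>x\<in>Qcar n. \<not> c (g x)" by blast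
    have "\<not> c (g {..<n})" using g(2) by (simp add: Qcar_def)
    thus False using qchain[OF g(1)] unfolding c_def by simp
  qed
  show ?thesis unfolding ramsey_arrow_def using noblue nored by blast
qed

lemma lower2:
  assumes P: "is_poset A r" and T: "trivial_poset A r" and W: "2 \<le> width A r"
    and N: "N \<le> n + height A r"
  shows "\<not> ramsey_arrow A r (Qcar n) (Qrel n) N"
proof -
  define c where "c X = (X = {} \<or> n + 1 \<le> card X)" for X :: "nat set"
  obtain D where D: "is_antichain A r D" "card D = width A r" using width_props(1)[OF P] by blast
  obtain a b where ab: "a \<in> D" "b \<in> D" "a \<noteq> b"
  proof -
    have "1 < card D" using D W by simp
    moreover have "finite D" using D poset_facts(1)[OF P] unfolding is_antichain_def by (auto intro: finite_subset)
    ultimately obtain a b where "a \<in> D" "b \<in> D" "a \<noteq> b" using card_le_Suc0_iff_eq[of D] by (auto simp: not_le[symmetric])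
    thus ?thesis using that by blast
  qed
  have abA: "a \<in> A" "b \<in> A" and nab: "\<not> cmp r a b" using D ab unfolding is_antichain_def cmp_def by auto
  obtain C where C: "is_chain A r C" "card C = height A r" using height_props(1)[OF P] by blast
  have CA: "C \<subseteq> A" using C by (simp add: is_chain_def)
  have h1: "1 \<le> height A r"
  proof -
    have "is_chain A r {a}" using abA poset_facts(3)[OF P] by (simp add: is_chain_def)
    thus ?thesis using height_props(2)[OF P] by fastforce
  qed
  then obtain c0 where c0: "c0 \<in> C" using C(2) by (metis card.empty ex_in_conv not_one_le_zero)
  obtain x where x: "x \<in> A" "\<not> cmp r x c0"
  proof -
    have "\<not> (cmp r a c0 \<and> cmp r b c0)"
    proof
      assume h: "cmp r a c0 \<and> cmp r b c0"
      hence "cmp r c0 b" by (auto simp: cmp_def)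
      hence "cmp r a b" using cmp_trans[OF P T abA(1) _ abA(2)] h c0 CA by blast
      thus False using nab by simp
    qed
    thus ?thesis using that abA by blast
  qed
  have xC: "\<not> cmp r x y" if "y \<in> C" for y
  proof
    assume "cmp r x y"
    moreover have "cmp r y c0" using C(1) that c0 unfolding is_chain_def cmp_def by blast
    ultimately have "cmp r x c0" using cmp_trans[OF P T x(1) _ ] that c0 CA by blast
    thus False using x(2) by simp
  qed
  have noblue: "\<not> (\<exists>f. induced_embedding A r (Qcar N) (Qrel N) f \<and> (\<forall>x\<in>A. c (f x)))"
  proof
    assume "\<exists>f. induced_embedding A r (Qcar N) (Qrel N) f \<and> (\<forall>x\<in>A. c (f x))"
    then obtain f where f: "induced_embedding A r (Qcar N) (Qrel N) f" "\<forall>x\<in>A. c (f x)" by blast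
    note ci = chain_img[OF P f(1) C(1)]
    have inc: "\<not> f x \<subseteq> f y \<and> \<not> f y \<subseteq> f x" if "y \<in> C" for y
      using xC[OF that] emb_facts(2)[OF f(1)] x(1) that CA unfolding cmp_def by blast
    have big: "n + 1 \<le> card (f y)" if "y \<in> C" for y
    proof -
      have "f y \<noteq> {}" using inc[OF that] by blast
      thus ?thesis using f(2) that CA unfolding c_def by blast
    qed
    have sub: "card ` f ` C \<subseteq> {n+1..N}"
    proof
      fix k assume "k \<in> card ` f ` C"
      then obtain y where y: "y \<in> C" "k = card (f y)" by blast
      have "k \<le> N" using ci(2) y by (metis card_lessThan card_mono finite_lessThan image_eqI)
      thus "k \<in> {n+1..N}" using big[OF y(1)] y by simp
    qed
    have eq: "card ` f ` C = {n+1..N}"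
    proof (rule card_subset_eq)
      show "finite {n+1..N}" by simp
      show "card ` f ` C \<subseteq> {n+1..N}" by (rule sub)
      have "card (card ` f ` C) \<le> card {n+1..N}" using sub by (rule card_mono[rotated]) simp
      moreover have "card {n+1..N} \<le> card (card ` f ` C)" using ci(1) C(2) N by simp
      ultimately show "card (card ` f ` C) = card {n+1..N}" by simp
    qed
    have "card (f c0) \<in> {n+1..N}" using eq c0 by blast
    hence "N \<in> card ` f ` C" using eq by auto
    then obtain y where y: "y \<in> C" "card (f y) = N" by auto
    have "f y = {..<N}" using ci(2) y by (metis card_lessThan card_subset_eq finite_lessThan image_eqI)
    moreover have "f x \<subseteq> {..<N}" using emb_facts(1)[OF f(1) x(1) x(1)] .
    ultimately show False using inc[OF y(1)] by simp
  qed
  have nored: "\<not> (\<exists>g. induced_embedding (Qcar n) (Qrel n) (Qcar N) (Qrel N) g \<and> (\<forall>x\<in>Qcar n. \<not> c (g x)))"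
  proof
    assume "\<exists>g. induced_embedding (Qcar n) (Qrel n) (Qcar N) (Qrel N) g \<and> (\<forall>x\<in>Qcar n. \<not> c (g x))"
    then obtain g where g: "induced_embedding (Qcar n) (Qrel n) (Qcar N) (Qrel N) g" "\<forall>x\<in>Qcar n. \<not> c (g x)" by blast
    have r1: "\<not> c (g {..<n})" "\<not> c (g {})" using g(2) by (auto simp: Qcar_def)
    have "g {} \<in> Qcar N" using g(1) unfolding induced_embedding_def Qcar_def by auto
    hence "finite (g {})" by (auto simp: Qcar_def intro: finite_subset)
    hence "1 \<le> card (g {})" using r1(2) unfolding c_def by (simp add: Suc_le_eq card_gt_0_iff)
    thus False using qchain[OF g(1)] r1(1) unfolding c_def by simp
  qed
  show ?thesis unfolding ramsey_arrow_def using noblue nored by blast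
qed

lemma upper:
  assumes P: "is_poset A r" and T: "trivial_poset A r" and Ane: "A \<noteq> {}"
    and wk: "width A r \<le> k choose (k div 2)"
  shows "ramsey_arrow A r (Qcar n) (Qrel n) (n + (height A r - 1) + k)"
proof -
  note pf = poset_facts[OF P]
  define h where "h = height A r"
  define M where "M = h - 1"
  define N where "N = n + M + k"
  have h1: "1 \<le> h"
  proof -
    obtain a where "a \<in> A" using Ane by blast
    hence "is_chain A r {a}" using pf(3) by (simp add: is_chain_def)
    thus ?thesis using height_props(2)[OF P] unfolding h_def by fastforce
  qed
  have NN: "n + (height A r - 1) + k = N" by (simp add: N_def M_def h_def)
  define Z where "Z = {n+M..<N}"
  define L where "L = {S. S \<subseteq> Z \<and> card S = k div 2}"
  have cardL: "card L = k choose (k div 2)"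
  proof -
    have "card Z = k" by (simp add: Z_def N_def)
    thus ?thesis unfolding L_def using n_subsets[of Z "k div 2"] by (simp add: Z_def)
  qed
  have finL: "finite L" unfolding L_def Z_def by (rule finite_subset[of _ "Pow {n+M..<N}"]) auto
  show ?thesis unfolding NN ramsey_arrow_def
  proof (intro allI)
    fix c :: "nat set \<Rightarrow> bool"
    show "(\<exists>f. induced_embedding A r (Qcar N) (Qrel N) f \<and> (\<forall>x\<in>A. c (f x))) \<or>
          (\<exists>g. induced_embedding (Qcar n) (Qrel n) (Qcar N) (Qrel N) g \<and> (\<forall>x\<in>Qcar n. \<not> c (g x)))"
    proof (cases "\<exists>g. induced_embedding (Qcar n) (Qrel n) (Qcar N) (Qrel N) g \<and> (\<forall>x\<in>Qcar n. \<not> c (g x))")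
      case True thus ?thesis by blast
    next
      case False
      define good where "good S Ch \<longleftrightarrow> card Ch = Suc M \<and> (\<forall>E\<in>Ch. c E \<and> (\<exists>T. T \<subseteq> {..<n+M} \<and> E = T \<union> S))
           \<and> (\<forall>E\<in>Ch. \<forall>E'\<in>Ch. E \<subseteq> E' \<or> E' \<subseteq> E)" for S Ch
      have exCh: "\<exists>Ch. good S Ch" if "S \<in> L" for S
      proof -
        have "S \<subseteq> {..<N}" "S \<inter> {..<n+M} = {}" using that unfolding L_def Z_def by auto
        moreover have "n + M \<le> N" by (simp add: N_def)
        ultimately have "(\<exists>g. induced_embedding (Qcar n) (Qrel n) (Qcar N) (Qrel N) g \<and> (\<forall>x\<in>Qcar n. \<not> c (g x)))
    \<or> (\<exists>Ch. card Ch = Suc M \<and> (\<forall>E\<in>Ch. c E \<and> (\<exists>T. T \<subseteq> {..<n+M} \<and> E = T \<union> S))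
           \<and> (\<forall>E\<in>Ch. \<forall>E'\<in>Ch. E \<subseteq> E' \<or> E' \<subseteq> E))" by (rule column)
        with False show ?thesis unfolding good_def by blast
      qed
      define Chs where "Chs S = (SOME Ch. good S Ch)" for S
      have Chs: "good S (Chs S)" if "S \<in> L" for S unfolding Chs_def using exCh[OF that] by (rule someI_ex)
      define cls where "cls x = {y\<in>A. cmp r x y}" for x
      define CL where "CL = cls ` A"
      have cls_self: "x \<in> cls x" if "x \<in> A" for x using that pf(3) by (simp add: cls_def cmp_def)
      have cls_eq: "cls x = cls y" if "x \<in> A" "y \<in> A" "cmp r x y" for x y
      proof -
        have "cmp r y x" using that(3) by (auto simp: cmp_def)
        have "cmp r x z \<longleftrightarrow> cmp r y z" if "z \<in> A" for z
          using cmp_trans[OF P T] \<open>x \<in> A\<close> \<open>y \<in> A\<close> \<open>cmp r x y\<close> \<open>cmp r y x\<close> that by blast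
        thus ?thesis unfolding cls_def by auto
      qed
      have cls_cmp: "cmp r x y" if "x \<in> A" "y \<in> A" "cls x = cls y" for x y
      proof -
        have "y \<in> cls x" using cls_self[OF that(2)] that(3) by simp
        thus ?thesis by (simp add: cls_def)
      qed
      have finCL: "finite CL" unfolding CL_def using pf(1) by simp
      have cardCL: "card CL \<le> width A r"
      proof -
        define rep where "rep K = (SOME y. y \<in> K)" for K :: "'a set"
        have rep: "rep K \<in> K" "cls (rep K) = K" "rep K \<in> A" if KCL: "K \<in> CL" for K
        proof -
          obtain x where x: "x \<in> A" "K = cls x" using KCL unfolding CL_def by blast
          show "rep K \<in> K" unfolding rep_def using cls_self[OF x(1)] x(2) by (metis someI_ex)
          thus rA: "rep K \<in> A" using x(2) by (simp add: cls_def)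
          have "cmp r x (rep K)" using \<open>rep K \<in> K\<close> x by (simp add: cls_def)
          thus "cls (rep K) = K" using cls_eq[OF x(1) rA] x(2) by simp
        qed
        have inj: "inj_on rep CL" by (rule inj_onI) (metis rep(2))
        have "is_antichain A r (rep ` CL)"
          unfolding is_antichain_def
        proof (intro conjI ballI impI)
          show "rep ` CL \<subseteq> A" using rep(3) by blast
        next
          fix x y assume xy: "x \<in> rep ` CL" "y \<in> rep ` CL" "x \<noteq> y"
          then obtain K K' where K: "K \<in> CL" "K' \<in> CL" "x = rep K" "y = rep K'" by blast
          show "(x,y) \<notin> r"
          proof
            assume "(x,y) \<in> r"
            hence "cls x = cls y" using cls_eq rep(3) K by (simp add: cmp_def)
            hence "K = K'" using rep(2) K by simp
            thus False using xy K by simp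
          qed
        qed
        hence "card (rep ` CL) \<le> width A r" by (rule width_props(2)[OF P])
        thus ?thesis using card_image[OF inj] by simp
      qed
      obtain \<psi> where psi: "\<psi> ` CL \<subseteq> L" "inj_on \<psi> CL"
        using card_le_inj[OF finCL finL] cardCL wk cardL by auto
      define R' where "R' = {(E, E'). (E::nat set) \<subseteq> E'}"
      have clsK: "linord (cls x) r" "finite (cls x)" "card (cls x) \<le> Suc M" if "x \<in> A" for x
      proof -
        have sub: "cls x \<subseteq> A" by (simp add: cls_def)
        have cm: "cmp r y z" if "y \<in> cls x" "z \<in> cls x" for y z
        proof -
          have "cls y = cls x" "cls z = cls x" using that cls_eq[OF _ \<open>x \<in> A\<close>] sub
            by (auto simp: cls_def cmp_def)
          moreover have yzA: "y \<in> A" "z \<in> A" using that sub by auto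
          ultimately show ?thesis using cls_cmp[OF yzA] by simp
        qed
        show "linord (cls x) r" unfolding linord_def
          using pf(3,4,5) cm sub unfolding trans_def antisym_def cmp_def by blast
        show "finite (cls x)" using pf(1) sub by (rule finite_subset[rotated])
        have "is_chain A r (cls x)" unfolding is_chain_def using sub cm by (simp add: cmp_def)
        hence "card (cls x) \<le> h" using height_props(2)[OF P] by (simp add: h_def)
        thus "card (cls x) \<le> Suc M" by (simp add: M_def)
      qed
      have ChK: "linord (Chs (\<psi> (cls x))) R'" "finite (Chs (\<psi> (cls x)))"
        "card (Chs (\<psi> (cls x))) = Suc M" if "x \<in> A" for x
      proof -
        have "\<psi> (cls x) \<in> L" using psi(1) that unfolding CL_def by blast
        note g = Chs[OF this, unfolded good_def]
        show "card (Chs (\<psi> (cls x))) = Suc M" using g by simp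
        thus "finite (Chs (\<psi> (cls x)))" by (metis card.infinite nat.distinct(1))
        show "linord (Chs (\<psi> (cls x))) R'" unfolding linord_def R'_def using g by auto
      qed
      have exphi: "\<exists>\<phi>. (\<forall>y\<in>cls x. \<phi> y \<in> Chs (\<psi> (cls x))) \<and>
            (\<forall>y\<in>cls x. \<forall>z\<in>cls x. (y,z) \<in> r \<longleftrightarrow> (\<phi> y, \<phi> z) \<in> R')" if "x \<in> A" for x
        using linemb[OF clsK(1)[OF that] ChK(1)[OF that] clsK(2)[OF that] ChK(2)[OF that]]
          clsK(3)[OF that] ChK(3)[OF that] by simp
      define \<Phi> where "\<Phi> K = (SOME \<phi>. (\<forall>y\<in>K. \<phi> y \<in> Chs (\<psi> K)) \<and>
            (\<forall>y\<in>K. \<forall>z\<in>K. (y,z) \<in> r \<longleftrightarrow> (\<phi> y, \<phi> z) \<in> R'))" for K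
      have Phi: "(\<forall>y\<in>cls x. \<Phi> (cls x) y \<in> Chs (\<psi> (cls x))) \<and>
            (\<forall>y\<in>cls x. \<forall>z\<in>cls x. (y,z) \<in> r \<longleftrightarrow> (\<Phi> (cls x) y, \<Phi> (cls x) z) \<in> R')" if "x \<in> A" for x
        unfolding \<Phi>_def using exphi[OF that] by (rule someI_ex)
      define f where "f x = \<Phi> (cls x) x" for x
      have fin: "f x \<in> Chs (\<psi> (cls x))" if "x \<in> A" for x
        using Phi[OF that] cls_self[OF that] by (simp add: f_def)
      have fprop: "c (f x) \<and> f x \<subseteq> {..<N} \<and> f x \<inter> Z = \<psi> (cls x)" if xA: "x \<in> A" for x
      proof -
        have SL: "\<psi> (cls x) \<in> L" using psi(1) xA unfolding CL_def by blast
        note g = Chs[OF SL, unfolded good_def]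
        have "\<forall>E\<in>Chs (\<psi> (cls x)). c E \<and> (\<exists>T. T \<subseteq> {..<n+M} \<and> E = T \<union> \<psi> (cls x))"
          using g by simp
        hence "c (f x) \<and> (\<exists>T. T \<subseteq> {..<n+M} \<and> f x = T \<union> \<psi> (cls x))" using fin[OF xA] by blast
        then obtain U where U: "U \<subseteq> {..<n+M}" "f x = U \<union> \<psi> (cls x)" "c (f x)" by blast
        have pZ: "\<psi> (cls x) \<subseteq> Z" using SL by (simp add: L_def)
        have ZN: "Z \<subseteq> {..<N}" "{..<n+M} \<subseteq> {..<N}" "{..<n+M} \<inter> Z = {}" unfolding Z_def N_def by auto
        have "U \<union> \<psi> (cls x) \<subseteq> {..<N}" using U(1) pZ ZN(1,2) by (meson Un_least subset_trans)
        moreover have "(U \<union> \<psi> (cls x)) \<inter> Z = \<psi> (cls x)" using U(1) pZ ZN(3) by blast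
        ultimately show ?thesis using U(2,3) by simp
      qed
      have rel: "(x,y) \<in> r \<longleftrightarrow> f x \<subseteq> f y" if "x \<in> A" "y \<in> A" for x y
      proof (cases "cls x = cls y")
        case True
        have "y \<in> cls x" using True cls_self[OF that(2)] by simp
        thus ?thesis using Phi[OF that(1)] cls_self[OF that(1)] True unfolding f_def R'_def by auto
      next
        case False
        have "(x,y) \<notin> r" using cls_eq[OF that] False unfolding cmp_def by blast
        moreover have "\<not> f x \<subseteq> f y"
        proof
          assume "f x \<subseteq> f y"
          hence "\<psi> (cls x) \<subseteq> \<psi> (cls y)" using fprop[OF that(1)] fprop[OF that(2)] by blast
          moreover have "\<psi> (cls x) \<in> L" "\<psi> (cls y) \<in> L" using psi(1) that unfolding CL_def by blast+
          moreover have "finite (\<psi> (cls y))" using \<open>\<psi> (cls y) \<in> L\<close> unfolding L_def Z_def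
            by (auto intro: finite_subset)
          ultimately have "\<psi> (cls x) = \<psi> (cls y)" unfolding L_def by (metis (mono_tags) card_subset_eq mem_Collect_eq)
          hence "cls x = cls y" using psi(2) that unfolding CL_def inj_on_def by blast
          thus False using False by simp
        qed
        ultimately show ?thesis by simp
      qed
      have emb: "induced_embedding A r (Qcar N) (Qrel N) f"
        unfolding induced_embedding_def
      proof (intro conjI ballI)
        show "inj_on f A"
        proof (rule inj_onI)
          fix x y assume "x \<in> A" "y \<in> A" "f x = f y"
          thus "x = y" using rel pf(5) unfolding antisym_def by blast
        qed
        show "f ` A \<subseteq> Qcar N" using fprop unfolding Qcar_def by auto
      next
        fix x y assume "x \<in> A" "y \<in> A"
        thus "((x, y) \<in> r) = ((f x, f y) \<in> Qrel N)" using rel fprop unfolding Qrel_def Qcar_def by auto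
      qed
      thus ?thesis using fprop by blast
    qed
  qed
qed

lemma cb_rec: "(Suc j) * ((2*Suc j) choose (Suc j)) = 2*(2*j+1) * ((2*j) choose j)"
proof -
  have a: "Suc j * (Suc (Suc (2*j)) choose Suc j) = Suc (Suc (2*j)) * (Suc (2*j) choose j)"
    by (rule Suc_times_binomial)
  have b: "Suc j * (Suc (2*j) choose Suc j) = Suc (2*j) * ((2*j) choose j)"
    by (rule Suc_times_binomial)
  have c: "Suc (2*j) choose Suc j = Suc (2*j) choose j"
    using central_binomial_odd[of "Suc (2*j)"] by simp
  have t: "2*Suc j = Suc (Suc (2*j))" by simp
  have u: "Suc (Suc (2*j)) * (Suc (2*j) choose j) = Suc j * (2 * (Suc (2*j) choose j))" by simp
  have "Suc j * ((2*Suc j) choose (Suc j)) = Suc j * (2 * (Suc (2*j) choose j))"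
    unfolding t using a u by (rule trans)
  hence "((2*Suc j) choose (Suc j)) = 2 * (Suc (2*j) choose j)" by (metis mult_left_cancel nat.simps(3))
  thus ?thesis using b c by (simp add: algebra_simps del: binomial_Suc_Suc)
qed

lemma cb_even: "j \<ge> 1 \<Longrightarrow> 16^j \<le> ((2*j) choose j)^2 * (4*j)"
proof (induction j rule: dec_induct)
  case base then show ?case by (simp add: numeral_eq_Suc)
next
  case (step j)
  define B where "B = (2*j) choose j"
  define B' where "B' = (2*Suc j) choose Suc j"
  have r: "Suc j * B' = 2*(2*j+1)*B" using cb_rec[of j] by (simp add: B_def B'_def)
  have "Suc j * 16^(Suc j) = 16 * (Suc j * 16^j)" by simp
  also have "\<dots> \<le> 16 * (Suc j * (B^2*(4*j)))" using step.IH unfolding B_def by (intro mult_le_mono2)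
  also have "\<dots> \<le> 16 * ((2*j+1)^2 * B^2)"
  proof -
    have "Suc j * (4*j) \<le> (2*j+1)^2" by (simp add: power2_eq_square algebra_simps)
    hence "Suc j * (4*j) * B^2 \<le> (2*j+1)^2 * B^2" by (rule mult_right_mono) simp
    thus ?thesis by (simp add: algebra_simps)
  qed
  also have "\<dots> = Suc j * (B'^2 * (4 * Suc j))"
  proof -
    have "(Suc j * B')^2 = (2*(2*j+1)*B)^2" using r by simp
    thus ?thesis by (simp add: power2_eq_square algebra_simps)
  qed
  finally have "Suc j * 16^(Suc j) \<le> Suc j * (B'^2 * (4 * Suc j))" .
  thus ?case unfolding B'_def by (simp only: Suc_mult_le_cancel1)
qed

lemma cb_bound: "m \<ge> 1 \<Longrightarrow> 4^m \<le> (m choose (m div 2))^2 * (2*m+2)"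
proof (cases "even m")
  case True
  assume m: "m \<ge> 1"
  then obtain j where j: "m = 2*j" "j \<ge> 1" using True by (auto elim!: evenE)
  have "(4::nat)^m = 16^j" by (simp add: j power_mult)
  also have "\<dots> \<le> ((2*j) choose j)^2 * (4*j)" using cb_even j by simp
  also have "\<dots> \<le> ((2*j) choose j)^2 * (2*m+2)" by (simp add: j)
  finally show ?thesis using j by simp
next
  case False
  then obtain j where j: "m = 2*j+1" by (auto elim!: oddE)
  define C where "C = m choose (m div 2)"
  have md: "m div 2 = j" using j by simp
  have B: "(2*Suc j) choose (Suc j) = 2*C"
  proof -
    have "(2*Suc j) choose (Suc j) = (Suc (2*j) choose j) + (Suc (2*j) choose Suc j)" by simp
    also have "Suc (2*j) choose Suc j = Suc (2*j) choose j"
      using central_binomial_odd[of "Suc (2*j)"] by simp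
    finally show ?thesis by (simp add: C_def md j)
  qed
  have "16^(Suc j) \<le> (2*C)^2 * (4*Suc j)" using cb_even[of "Suc j"] B by simp
  moreover have "(16::nat)^Suc j = 4 * 4^m" by (simp add: j power_add power_mult)
  moreover have "(2*C)^2 * (4*Suc j) = 4 * (C^2 * (2*m+2))" by (simp add: j power2_eq_square algebra_simps)
  ultimately have "4 * 4^m \<le> 4 * (C^2 * (2*m+2))" by simp
  thus ?thesis by (simp add: C_def)
qed

lemma pow_ge: "m \<ge> 5 \<Longrightarrow> m + 1 \<le> (2::nat)^(m-2)"
proof (induction m rule: dec_induct)
  case base then show ?case by simp
next
  case (step m)
  have "Suc m - 2 = Suc (m - 2)" using step.hyps by simp
  then show ?case using step.IH by simp
qed

lemma bin_ge: "n \<le> n choose (n div 2)"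
proof (cases "n = 0")
  case False
  have "n choose 1 \<le> n choose (n div 2)" by (rule binomial_maximum)
  thus ?thesis by simp
qed simp

lemma analytic:
  fixes w :: nat assumes w: "w \<ge> 2"
  shows "\<exists>k. w \<le> k choose (k div 2) \<and> real k < log 2 (real w) + 1/2 * log 2 (log 2 (real w)) + 2"
proof -
  define k where "k = (LEAST k. w \<le> k choose (k div 2))"
  have kk: "w \<le> k choose (k div 2)" unfolding k_def by (rule LeastI[of _ w]) (rule bin_ge)
  have k2: "k \<ge> 2"
  proof (rule ccontr)
    assume "\<not> k \<ge> 2" hence "k = 0 \<or> k = 1" by auto
    thus False using kk w by auto
  qed
  define m where "m = k - 1"
  have mk: "k = m + 1" "m \<ge> 1" using k2 by (auto simp: m_def)
  have Cw: "m choose (m div 2) < w"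
  proof -
    have "\<not> w \<le> m choose (m div 2)" unfolding k_def
      by (rule not_less_Least) (use mk in \<open>simp add: k_def\<close>)
    thus ?thesis by simp
  qed
  define lw where "lw = log 2 (real w)"
  have lw1: "lw \<ge> 1" using w by (simp add: lw_def le_log_iff)
  have goal: "real m - 1 < lw + 1/2 * log 2 lw"
  proof -
    have "m = 1 \<or> m = 2 \<or> m = 3 \<or> m = 4 \<or> m \<ge> 5" using mk(2) by linarith
    then consider "m = 1" | "m = 2" | "m = 3" | "m = 4" | "m \<ge> 5" by blast
    then show ?thesis
    proof cases
      case 1
      have "log 2 lw \<ge> 0" using lw1 by simp
      then show ?thesis using 1 lw1 by linarith
    next
      case 2
      have "w > 2" using Cw 2 by (simp add: numeral_eq_Suc)
      hence "lw > 1" by (simp add: lw_def less_log_iff)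
      hence "log 2 lw > 0" by simp
      then show ?thesis using 2 \<open>lw > 1\<close> by linarith
    next
      case 3
      have "(3::nat) choose (3 div 2) = 3" by simp
      hence "w \<ge> 4" using Cw 3 by simp
      hence "lw \<ge> 2" by (simp add: lw_def le_log_iff)
      hence "log 2 lw \<ge> 1" by (simp add: le_log_iff)
      then show ?thesis using 3 \<open>lw \<ge> 2\<close> by linarith
    next
      case 4
      have "4 choose 2 = (6::nat)" by (simp add: numeral_eq_Suc)
      hence "w \<ge> 7" using Cw 4 by simp
      have "(2::real) powr (5/2) < 7"
      proof -
        have "(2::real) powr (5/2) = 2 powr (2 + 1/2)" by simp
        also have "\<dots> = 2 powr 2 * 2 powr (1/2)" by (rule powr_add)
        also have "\<dots> = 4 * sqrt 2" by (simp add: powr_half_sqrt)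
        also have "sqrt 2 < 7/4" by (rule real_less_lsqrt) (auto simp: power2_eq_square)
        hence "4 * sqrt 2 < 7" by simp
        finally show ?thesis .
      qed
      moreover have "(7::real) \<le> real w" using \<open>w \<ge> 7\<close> by simp
      ultimately have "2 powr (5/2) < real w" by linarith
      hence "lw > 5/2" unfolding lw_def using w by (subst less_log_iff) auto
      hence "log 2 lw > 1" by (simp add: less_log_iff)
      then show ?thesis using 4 \<open>lw > 5/2\<close> by linarith
    next
      case 5
      have "(4::real)^m < real w ^2 * (2*real m+2)"
      proof -
        have "(4::real)^m \<le> real (m choose (m div 2))^2 * (2*real m+2)"
        proof -
          have "real (4^m) \<le> real ((m choose (m div 2))^2 * (2*m+2))"
            using cb_bound[OF mk(2)] by (simp only: of_nat_le_iff)
          thus ?thesis by (simp add: algebra_simps)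
        qed
        also have "\<dots> < real w ^2 * (2*real m+2)"
          using Cw by (intro mult_strict_right_mono power_strict_mono) auto
        finally show ?thesis .
      qed
      hence "log 2 ((4::real)^m) < log 2 (real w ^2 * (2*real m+2))"
        by (intro log_less) auto
      moreover have "log 2 ((4::real)^m) = 2*m"
      proof -
        have "(4::real)^m = 2 powr (2*m)" by (simp add: powr_realpow[symmetric] powr_mult[symmetric] flip: powr_powr)
        thus ?thesis by simp
      qed
      moreover have "log 2 (real w ^2 * (2*real m+2)) = 2*lw + (1 + log 2 (real m+1))"
      proof -
        have "log 2 (real w ^2 * (2*real m+2)) = log 2 (real w ^2) + log 2 (2*(real m+1))"
          using w by (subst log_mult) (auto simp: algebra_simps)
        also have "log 2 (real w ^2) = 2 * lw" using w by (simp add: log_nat_power lw_def)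
        also have "log 2 (2*(real m+1)) = 1 + log 2 (real m+1)" by (subst log_mult) auto
        finally show ?thesis by (simp add: add.commute)
      qed
      ultimately have A: "2*m < 2*lw + 1 + log 2 (real m+1)" by simp
      have "real m+1 \<le> 2 powr (real m - 2)"
      proof -
        have "real (m+1) \<le> real ((2::nat)^(m-2))" using pow_ge[OF 5] by (simp only: of_nat_le_iff)
        also have "\<dots> = 2 powr (real (m-2))" by (simp add: powr_realpow)
        also have "real (m-2) = real m - 2" using 5 by simp
        finally show ?thesis by simp
      qed
      hence lm: "log 2 (real m+1) \<le> real m - 2" by (simp add: le_powr_iff)
      define L where "L = real m - 1/2 - 1/2 * log 2 (real m+1)"
      have "L \<ge> (real m+1)/2" using lm by (simp add: L_def)
      hence Lp: "L > 0" by simp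
      have "lw > L" using A by (simp add: L_def)
      hence l1: "log 2 lw > log 2 L" using Lp by simp
      have l2: "log 2 L \<ge> log 2 ((real m+1)/2)" using \<open>L \<ge> (real m+1)/2\<close> by simp
      have l3: "log 2 ((real m+1)/2) = log 2 (real m+1) - 1" by (simp add: log_divide)
      have "log 2 lw > log 2 (real m+1) - 1" using l1 l2 l3 by linarith
      then show ?thesis using \<open>lw > L\<close> by (simp add: L_def)
    qed
  qed
  show ?thesis using kk goal mk by (intro exI[of _ k]) (simp add: lw_def)
qed

theorem corollary7:
  fixes A :: "'a set" and r :: "('a \<times> 'a) set"
  assumes "is_poset A r" and "trivial_poset A r"
  shows "(width A r = 1 \<longrightarrow>
            (\<forall>n::nat. n \<ge> 1 \<longrightarrow>
               poset_ramsey A r (Qcar n) (Qrel n) = n + height A r - 1))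
       \<and> (width A r \<ge> 2 \<longrightarrow>
            (\<forall>n::nat. n \<ge> 1 \<longrightarrow>
               n + height A r + 1 \<le> poset_ramsey A r (Qcar n) (Qrel n) \<and>
               real (poset_ramsey A r (Qcar n) (Qrel n)) <
                 real n + real (height A r) + log 2 (real (width A r))
                 + 1/2 * log 2 (log 2 (real (width A r))) + 1))"
proof -
  note P = assms(1) and T = assms(2)
  have Ane: "A \<noteq> {}" if "1 \<le> width A r"
  proof
    assume "A = {}"
    obtain D where D: "is_antichain A r D" "card D = width A r" using width_props(1)[OF P] by blast
    hence "D = {}" using \<open>A = {}\<close> by (simp add: is_antichain_def)
    thus False using D that by simp
  qed
  have h1: "1 \<le> height A r" if ne: "A \<noteq> {}"
  proof -
    obtain a where "a \<in> A" using ne by blast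
    hence "is_chain A r {a}" using poset_facts(3)[OF P] by (simp add: is_chain_def)
    thus ?thesis using height_props(2)[OF P] by fastforce
  qed
  show ?thesis
  proof (intro conjI impI allI)
    fix n :: nat assume w1: "width A r = 1" and n1: "n \<ge> 1"
    have ne: "A \<noteq> {}" using Ane w1 by simp
    have hh: "1 \<le> height A r" using h1[OF ne] .
    have up: "ramsey_arrow A r (Qcar n) (Qrel n) (n + height A r - 1)"
      using upper[OF P T ne, of 0 n] w1 hh by simp
    have low: "n + height A r - 1 \<le> N" if "ramsey_arrow A r (Qcar n) (Qrel n) N" for N
    proof (rule ccontr)
      assume "\<not> n + height A r - 1 \<le> N"
      hence "N + 2 \<le> n + height A r" by simp
      thus False using lower1[OF P _ hh] that by blast
    qed
    show "poset_ramsey A r (Qcar n) (Qrel n) = n + height A r - 1"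
      unfolding poset_ramsey_def by (rule Least_equality[where P="\<lambda>N. ramsey_arrow A r (Qcar n) (Qrel n) N", OF up low])
  next
    fix n :: nat assume w2: "2 \<le> width A r" and n1: "n \<ge> 1"
    have ne: "A \<noteq> {}" using Ane w2 by simp
    have hh: "1 \<le> height A r" using h1[OF ne] .
    obtain k where k: "width A r \<le> k choose (k div 2)"
      "real k < log 2 (real (width A r)) + 1/2 * log 2 (log 2 (real (width A r))) + 2"
      using analytic[OF w2] by blast
    have up: "ramsey_arrow A r (Qcar n) (Qrel n) (n + (height A r - 1) + k)"
      by (rule upper[OF P T ne k(1)])
    have le: "poset_ramsey A r (Qcar n) (Qrel n) \<le> n + (height A r - 1) + k"
      unfolding poset_ramsey_def by (rule Least_le[where P="\<lambda>N. ramsey_arrow A r (Qcar n) (Qrel n) N", OF up])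
    have ar: "ramsey_arrow A r (Qcar n) (Qrel n) (poset_ramsey A r (Qcar n) (Qrel n))"
      unfolding poset_ramsey_def by (rule LeastI[where P="\<lambda>N. ramsey_arrow A r (Qcar n) (Qrel n) N", OF up])
    show "n + height A r + 1 \<le> poset_ramsey A r (Qcar n) (Qrel n)"
    proof (rule ccontr)
      assume "\<not> n + height A r + 1 \<le> poset_ramsey A r (Qcar n) (Qrel n)"
      hence "poset_ramsey A r (Qcar n) (Qrel n) \<le> n + height A r" by simp
      thus False using lower2[OF P T w2] ar by blast
    qed
    have "real (poset_ramsey A r (Qcar n) (Qrel n)) \<le> real n + real (height A r) - 1 + real k"
      using le hh by linarith
    thus "real (poset_ramsey A r (Qcar n) (Qrel n)) <
                 real n + real (height A r) + log 2 (real (width A r))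
                 + 1/2 * log 2 (log 2 (real (width A r))) + 1" using k(2) by linarith
  qed
qed

end
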